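(* If $f$ has the saddle property, then the set $$\mathcal Q_{f\text{-DPI}}=\{Q \text{ pmf on }\mathcal Z:\ Q_S=P_S,\ \textstyle\sum_{s,\hat s}Q(s,x,y,\hat s)=P_{Y|X}(y|x)Q_X(x)\ \forall x,y,\ I_f(Q_{S,\widehat S})\le I_f(Q_{X,Y})\}$$ is convex.
   Context: $\mathcal S,\mathcal X,\mathcal Y,\widehat{\mathcal S}$ are finite nonempty sets, $\mathcal Z=\mathcal S\times\mathcal X\times\mathcal Y\times\widehat{\mathcal S}$, $P_S$ is a fixed pmf on $\mathcal S$ and $P_{Y|X}$ a fixed channel from $\mathcal X$ to $\mathcal Y$. For a pmf $Q$ on $\mathcal Z$, $Q_S,Q_X$ denote marginals and $Q_{S,\widehat S},Q_{X,Y}$ the pairwise marginals. For $f:(0,\infty)\to\mathbb R$ convex, let $f'(\infty)=\lim_{t\to\infty}f(t)/t\in(-\infty,+\infty]$; for a joint pmf $p(u,v)$ on a finite product set with marginals $p(u),p(v)$, $I_f(p)=\sum_{u,v}\phi(u,v)\in(-\infty,+\infty]$ where $\phi(u,v)=p(u,v)f(p(u)p(v)/p(u,v))$ if $p(u,v)>0$, $\phi(u,v)=p(u)p(v)f'(\infty)$ if $p(u,v)=0<p(u)p(v)$, and $\phi(u,v)=0$ if $p(u)p(v)=0$. A function $f$ has the saddle property if $f:(0,\infty)\to\mathbb R$ is convex and, for all finite sets $\mathcal U,\mathcal V$ and every kernel $p(v|u)$, the map $p_U\mapsto I_f\big(p_U(u)p(v|u)\big)$ is concave on the set of pmfs on $\mathcal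 U$. *)

theory Defs
  imports "HOL-Analysis.Analysis"
begin

definition fprime_inf :: "(real \<Rightarrow> real) \<Rightarrow> ereal" where
  "fprime_inf f = Lim at_top (\<lambda>t. ereal (f t / t))"

definition If_term :: "(real \<Rightarrow> real) \<Rightarrow> real \<Rightarrow> real \<Rightarrow> real \<Rightarrow> ereal" where
  "If_term f puv pu pv =
     (if puv > 0 then ereal (puv * f (pu * pv / puv))
      else if puv = 0 \<and> 0 < pu * pv then ereal (pu * pv) * fprime_inf f
      else 0)"

definition I_f :: "(real \<Rightarrow> real) \<Rightarrow> 'u set \<Rightarrow> 'v set \<Rightarrow> ('u \<Rightarrow> 'v \<Rightarrow> real) \<Rightarrow> ereal" where
  "I_f f U V p = (\<Sum>u\<in>U. \<Sum>v\<in>V.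
      If_term f (p u v) (\<Sum>v'\<in>V. p u v') (\<Sum>u'\<in>U. p u' v))"

definition is_pmf_on :: "'a set \<Rightarrow> ('a \<Rightarrow> real) \<Rightarrow> bool" where
  "is_pmf_on A p \<longleftrightarrow> (\<forall>a\<in>A. 0 \<le> p a) \<and> (\<Sum>a\<in>A. p a) = 1"

definition is_kernel_on :: "'a set \<Rightarrow> 'b set \<Rightarrow> ('a \<Rightarrow> 'b \<Rightarrow> real) \<Rightarrow> bool" where
  "is_kernel_on A B K \<longleftrightarrow> (\<forall>a\<in>A. is_pmf_on B (K a))"

text \<open>Arbitrary finite sets U, V are represented as finite sets of naturals
  (every finite set is in bijection with one). Concavity of an extended-real valued map on the
  simplex of pmfs on U is written out explicitly.\<close>
definition saddle_property :: "(real \<Rightarrow> real) \<Rightarrow> bool" where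
  "saddle_property f \<longleftrightarrow>
     convex_on {0<..} f \<and>
     (\<forall>(U::nat set) (V::nat set) K. finite U \<and> finite V \<and> is_kernel_on U V K \<longrightarrow>
        (\<forall>p1 p2 t. is_pmf_on U p1 \<and> is_pmf_on U p2 \<and> 0 \<le> t \<and> t \<le> 1 \<longrightarrow>
           ereal t * I_f f U V (\<lambda>u v. p1 u * K u v)
             + ereal (1 - t) * I_f f U V (\<lambda>u v. p2 u * K u v)
           \<le> I_f f U V (\<lambda>u v. (t * p1 u + (1 - t) * p2 u) * K u v)))"

definition Q_fDPI :: "(real \<Rightarrow> real) \<Rightarrow> ('s::finite \<Rightarrow> real) \<Rightarrow> ('x::finite \<Rightarrow> 'y::finite \<Rightarrow> real)
    \<Rightarrow> ('s \<times> 'x \<times> 'y \<times> 'h::finite \<Rightarrow> real) set" where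
  "Q_fDPI f PS W = {Q.
      is_pmf_on UNIV Q \<and>
      (\<forall>s. (\<Sum>x\<in>UNIV. \<Sum>y\<in>UNIV. \<Sum>h\<in>UNIV. Q (s, x, y, h)) = PS s) \<and>
      (\<forall>x y. (\<Sum>s\<in>UNIV. \<Sum>h\<in>UNIV. Q (s, x, y, h))
              = W x y * (\<Sum>s\<in>UNIV. \<Sum>y'\<in>UNIV. \<Sum>h\<in>UNIV. Q (s, x, y', h))) \<and>
      I_f f UNIV UNIV (\<lambda>s h. \<Sum>x\<in>UNIV. \<Sum>y\<in>UNIV. Q (s, x, y, h))
        \<le> I_f f UNIV UNIV (\<lambda>x y. \<Sum>s\<in>UNIV. \<Sum>h\<in>UNIV. Q (s, x, y, h))}"

end

theory Submission imports Defs "HOL-Real_Asymp.Real_Asymp" begin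

lemma fprime_props:
  fixes f :: "real \<Rightarrow> real"
  assumes cv: "convex_on {0<..} f"
  shows "fprime_inf f \<noteq> -\<infinity>"
    and "\<And>r s T. fprime_inf f = ereal r \<Longrightarrow> 0 < s \<Longrightarrow> s < T \<Longrightarrow> (f T - f s) / (T - s) \<le> r"
proof -
  define g where "g T = (f T - f 1) / (T - 1)" for T
  have slope: "(f s - f a) / (s - a) \<le> (f s - f b) / (s - b)" if "0 < s" "s < a" "a < b" for s a b
    using convex_on_slope_le(1)[OF cv, of s b a] that by auto
  have gmono: "g a \<le> g b" if "1 < a" "a \<le> b" for a b
  proof (cases "a = b")
    case False
    then show ?thesis using slope[of 1 a b] that unfolding g_def
      by (simp add: divide_simps) (auto simp: algebra_simps)
  qed simp
  define L where "L = (SUP T\<in>{1<..}. ereal (g T))"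
  have gL: "ereal (g T) \<le> L" if "1 < T" for T
    unfolding L_def using that by (intro SUP_upper) auto
  have lim1: "((\<lambda>T. ereal (g T)) \<longlongrightarrow> L) at_top"
  proof (rule order_tendstoI)
    fix a assume "a < L"
    then obtain T0 where T0: "T0 \<in> {1<..}" "a < ereal (g T0)" unfolding L_def less_SUP_iff by blast
    show "\<forall>\<^sub>F T in at_top. a < ereal (g T)"
      using eventually_ge_at_top[of T0]
      by eventually_elim (use T0 gmono in \<open>force intro: less_le_trans\<close>)
  next
    fix a assume "L < a"
    show "\<forall>\<^sub>F T in at_top. ereal (g T) < a"
      using eventually_gt_at_top[of 1]
      by eventually_elim (use gL \<open>L < a\<close> in \<open>force intro: le_less_trans\<close>)
  qed
  have lim2: "((\<lambda>T. ereal ((T - 1) / T)) \<longlongrightarrow> ereal 1) at_top"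
    unfolding lim_ereal by real_asymp
  have lim3: "((\<lambda>T. ereal (f 1 / T)) \<longlongrightarrow> ereal 0) at_top"
    unfolding lim_ereal by real_asymp
  have "((\<lambda>T. ereal (g T) * ereal ((T - 1) / T) + ereal (f 1 / T)) \<longlongrightarrow> L * ereal 1 + ereal 0) at_top"
    by (intro tendsto_add_ereal_general tendsto_mult_ereal lim1 lim2 lim3) auto
  then have "((\<lambda>T. ereal (g T) * ereal ((T - 1) / T) + ereal (f 1 / T)) \<longlongrightarrow> L) at_top"
    by simp
  moreover have "\<forall>\<^sub>F T in at_top. ereal (g T) * ereal ((T - 1) / T) + ereal (f 1 / T) = ereal (f T / T)"
    using eventually_gt_at_top[of 1]
    by eventually_elim (simp add: g_def field_simps)
  ultimately have "((\<lambda>T. ereal (f T / T)) \<longlongrightarrow> L) at_top"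
    using Lim_transform_eventually by fastforce
  then have FL: "fprime_inf f = L"
    unfolding fprime_inf_def by (intro tendsto_Lim) auto
  show "fprime_inf f \<noteq> -\<infinity>"
    using gL[of 2] FL by auto
  fix r s T :: real assume r: "fprime_inf f = ereal r" and s: "0 < s" "s < T"
  have gr: "f T' \<le> f 1 + (T' - 1) * r" if "1 < T'" for T'
  proof -
    have "g T' \<le> r" using gL[OF that] r FL by simp
    then show ?thesis using that unfolding g_def by (simp add: divide_simps mult.commute)
  qed
  show "(f T - f s) / (T - s) \<le> r"
  proof (rule ccontr)
    define \<delta> where "\<delta> = (f T - f s) / (T - s)"
    assume "\<not> ?thesis"
    then have dr: "\<delta> > r" unfolding \<delta>_def by simp
    define K where "K = f 1 - f s + (s - 1) * r"
    define T' where "T' = max T 1 + 1 + \<bar>K\<bar> / (\<delta> - r)"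
    have "\<bar>K\<bar> / (\<delta> - r) \<ge> 0" using dr by simp
    then have T': "T' > T" "T' > 1" unfolding T'_def by auto
    have "\<delta> \<le> (f T' - f s) / (T' - s)"
      using slope[of s T T'] s T' unfolding \<delta>_def
      by (simp add: divide_simps) (auto simp: algebra_simps)
    then have "\<delta> * (T' - s) \<le> f T' - f s" using T' s by (simp add: divide_simps)
    also have "\<dots> \<le> f 1 + (T' - 1) * r - f s" using gr[OF T'(2)] by simp
    finally have A: "(\<delta> - r) * (T' - s) \<le> K" unfolding K_def by (simp add: algebra_simps)
    have "T' - s > \<bar>K\<bar> / (\<delta> - r)" unfolding T'_def using s by auto
    then have "(\<delta> - r) * (T' - s) > (\<delta> - r) * (\<bar>K\<bar> / (\<delta> - r))"
      using dr by (intro mult_strict_left_mono) auto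
    then have "(\<delta> - r) * (T' - s) > \<bar>K\<bar>" using dr by simp
    then show False using A by simp
  qed
qed


lemma f_incr:
  fixes f :: "real \<Rightarrow> real"
  assumes cv: "convex_on {0<..} f" and r: "fprime_inf f = ereal r" and "0 < s" "0 \<le> d"
  shows "f (s + d) \<le> f s + d * r"
proof (cases "d = 0")
  case False
  then have "(f (s + d) - f s) / (s + d - s) \<le> r"
    using fprime_props(2)[OF cv r, of s "s + d"] assms by auto
  then show ?thesis using False assms by (simp add: divide_simps mult.commute)
qed simp

lemma If_term_nonMinf:
  assumes cv: "convex_on {0<..} (f::real\<Rightarrow>real)" and "0 \<le> y"
  shows "If_term f x y 1 \<noteq> -\<infinity>"
  using fprime_props(1)[OF cv] assms
  by (cases "fprime_inf f") (auto simp: If_term_def)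

lemma persp_real:
  fixes f :: "real \<Rightarrow> real"
  assumes cv: "convex_on {0<..} f" and x: "0 < x1" "0 < x2" and y: "0 < y1" "0 < y2"
    and t: "0 \<le> t" "t \<le> 1"
  shows "(t*x1 + (1-t)*x2) * f ((t*y1 + (1-t)*y2) / (t*x1 + (1-t)*x2))
         \<le> t * (x1 * f (y1/x1)) + (1-t) * (x2 * f (y2/x2))"
proof -
  define x where "x = t*x1 + (1-t)*x2"
  have xp: "x > 0" unfolding x_def using x t
    by (cases "t = 0") (auto intro: add_pos_nonneg add_nonneg_pos)
  define \<mu> where "\<mu> = t*x1/x"
  have mu: "0 \<le> \<mu>" "\<mu> \<le> 1" unfolding \<mu>_def using xp x t by (auto simp: divide_simps x_def)
  have m1: "1 - \<mu> = (1-t)*x2/x" unfolding \<mu>_def using xp by (simp add: divide_simps x_def)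
  have eq: "(t*y1 + (1-t)*y2) / x = \<mu> * (y1/x1) + (1 - \<mu>) * (y2/x2)"
    unfolding m1 unfolding \<mu>_def using x xp by (simp add: divide_simps)
  have "f (\<mu> * (y1/x1) + (1 - \<mu>) * (y2/x2)) \<le> \<mu> * f (y1/x1) + (1 - \<mu>) * f (y2/x2)"
    using convex_onD[OF cv, of "1-\<mu>" "y1/x1" "y2/x2"] mu x y by simp
  then have "x * f ((t*y1 + (1-t)*y2) / x) \<le> x * (\<mu> * f (y1/x1) + (1 - \<mu>) * f (y2/x2))"
    unfolding eq using xp by (intro mult_left_mono) auto
  also have "\<dots> = (x*\<mu>) * f (y1/x1) + (x*(1-\<mu>)) * f (y2/x2)" by (simp add: algebra_simps)
  also have "x*\<mu> = t*x1" unfolding \<mu>_def using xp by simp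
  also have "x*(1-\<mu>) = (1-t)*x2" unfolding m1 using xp by simp
  also have "t*x1 * f (y1/x1) + (1-t)*x2 * f (y2/x2) = t * (x1 * f (y1/x1)) + (1-t) * (x2 * f (y2/x2))"
    by (simp add: algebra_simps)
  finally show ?thesis unfolding x_def .
qed

lemma persp_mixed:
  fixes f :: "real \<Rightarrow> real"
  assumes cv: "convex_on {0<..} f" and x: "0 < x2" and y: "0 \<le> y1" "0 < y2"
    and t: "0 < t" "t < 1"
  shows "If_term f (t*0 + (1-t)*x2) (t*y1 + (1-t)*y2) 1
         \<le> ereal t * If_term f 0 y1 1 + ereal (1-t) * If_term f x2 y2 1"
proof -
  have xp: "(1-t)*x2 > 0" using x t by simp
  show ?thesis
  proof (cases "y1 = 0")
    case True
    note y10 = this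
    have "((1-t)*y2) / ((1-t)*x2) = y2/x2" using t by simp
    then show ?thesis using y10 xp x t by (simp add: If_term_def)
  next
    case False
    then have y1p: "y1 > 0" using y by simp
    show ?thesis
    proof (cases "fprime_inf f")
      case (real r)
      define s where "s = y2/x2"
      define d where "d = t*y1/((1-t)*x2)"
      have "(t*y1 + (1-t)*y2) / ((1-t)*x2) = s + d"
        unfolding s_def d_def using xp t x by (simp add: divide_simps)
      moreover have "f (s + d) \<le> f s + d * r"
      proof -
        have "0 \<le> d" unfolding d_def using xp t y by simp
        then show ?thesis using f_incr[OF cv real, of s d] unfolding s_def using x y by auto
      qed
      ultimately have "(1-t)*x2 * f ((t*y1 + (1-t)*y2) / ((1-t)*x2)) \<le> (1-t)*x2 * (f s + d * r)"
        using xp by (simp add: mult_left_mono)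
      also have "\<dots> = (1-t)*(x2 * f s) + ((1-t)*x2*d) * r"
        by (simp add: algebra_simps)
      also have "(1-t)*x2*d = t*y1"
      proof -
        have nz: "(1-t)*x2 \<noteq> 0" using xp by linarith
        have "(1-t)*x2*d = ((1-t)*x2) * (t*y1) / ((1-t)*x2)" unfolding d_def by simp
        also have "\<dots> = t*y1" using nz by (rule nonzero_mult_div_cancel_left)
        finally show ?thesis .
      qed
      also have "(1-t)*(x2 * f s) + (t*y1) * r = t * (y1 * r) + (1-t) * (x2 * f (y2/x2))"
        unfolding s_def by (simp add: algebra_simps)
      finally show ?thesis using real xp y1p x by (simp add: If_term_def)
    next
      case PInf
      then show ?thesis using xp y1p t by (simp add: If_term_def)
    next
      case MInf
      then show ?thesis using fprime_props(1)[OF cv] by simp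
    qed
  qed
qed

lemma persp_convex:
  fixes f :: "real \<Rightarrow> real"
  assumes cv: "convex_on {0<..} f"
    and nn: "0 \<le> x1" "0 \<le> x2" "0 \<le> y1" "0 \<le> y2"
    and pos: "0 < x1 \<Longrightarrow> 0 < y1" "0 < x2 \<Longrightarrow> 0 < y2"
    and t: "0 \<le> t" "t \<le> 1"
  shows "If_term f (t*x1 + (1-t)*x2) (t*y1 + (1-t)*y2) 1
         \<le> ereal t * If_term f x1 y1 1 + ereal (1-t) * If_term f x2 y2 1"
proof -
  consider "t = 0" | "t = 1" | "0 < t" "t < 1" using t by linarith
  then show ?thesis
  proof cases
    case 1 then show ?thesis by (simp add: zero_ereal_def[symmetric])
  next
    case 2 then show ?thesis by (simp add: zero_ereal_def[symmetric])
  next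
    case 3
    note tt = this
    consider "0 < x1" "0 < x2" | "x1 = 0" "0 < x2" | "0 < x1" "x2 = 0" | "x1 = 0" "x2 = 0"
      using nn by linarith
    then show ?thesis
    proof cases
      case 1
      have xp: "t*x1 + (1-t)*x2 > 0" using 1 tt by (simp add: add_pos_pos)
      show ?thesis using persp_real[OF cv 1 pos(1)[OF 1(1)] pos(2)[OF 1(2)], of t] 1 xp t
        by (simp add: If_term_def)
    next
      case 2
      then show ?thesis using persp_mixed[OF cv 2(2) nn(3) pos(2)[OF 2(2)] tt] by simp
    next
      case 3
      have "If_term f (t*x1 + (1-t)*x2) (t*y1 + (1-t)*y2) 1
         = If_term f ((1-t)*x2 + (1 - (1-t))*x1) ((1-t)*y2 + (1 - (1-t))*y1) 1"
        by (simp add: algebra_simps)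
      also have "\<dots> \<le> ereal (1-t) * If_term f x2 y2 1 + ereal (1 - (1-t)) * If_term f x1 y1 1"
        using persp_mixed[OF cv 3(1) nn(4) pos(1)[OF 3(1)], of "1-t"] tt 3 by simp
      finally show ?thesis by (simp add: add.commute)
    next
      case 4
      have ty: "t*y1 + (1-t)*y2 \<ge> 0" using nn tt by simp
      show ?thesis
      proof (cases "fprime_inf f")
        case (real r)
        then show ?thesis using 4 tt nn ty
          by (cases "y1 = 0"; cases "y2 = 0") (auto simp: If_term_def algebra_simps add_pos_nonneg add_nonneg_pos)
      next
        case PInf
        then show ?thesis using 4 tt nn ty
          by (cases "y1 = 0"; cases "y2 = 0") (auto simp: If_term_def add_pos_nonneg add_nonneg_pos)
      next
        case MInf
        then show ?thesis using fprime_props(1)[OF cv] by simp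
      qed
    qed
  qed
qed


lemma If_term_1: "If_term f a b c = If_term f a (b*c) 1"
  by (simp add: If_term_def)

lemma If_f_convex_fixed_row:
  fixes f :: "real \<Rightarrow> real"
  assumes cv: "convex_on {0<..} f" and fin: "finite U" "finite V"
    and nn1: "\<And>u v. 0 \<le> p1 u v" and nn2: "\<And>u v. 0 \<le> p2 u v"
    and row: "\<And>u. (\<Sum>v\<in>V. p1 u v) = (\<Sum>v\<in>V. p2 u v)"
    and t: "0 \<le> t" "t \<le> 1"
  shows "I_f f U V (\<lambda>u v. t * p1 u v + (1-t) * p2 u v)
      \<le> ereal t * I_f f U V p1 + ereal (1-t) * I_f f U V p2"
proof -
  define r where "r u = (\<Sum>v\<in>V. p1 u v)" for u
  define c1 where "c1 v = (\<Sum>u\<in>U. p1 u v)" for v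
  define c2 where "c2 v = (\<Sum>u\<in>U. p2 u v)" for v
  have rowm: "(\<Sum>v\<in>V. t * p1 u v + (1-t) * p2 u v) = t * r u + (1-t) * r u" for u
    unfolding r_def sum.distrib sum_distrib_left[symmetric] row ..
  have colm: "(\<Sum>u'\<in>U. t * p1 u' v + (1-t) * p2 u' v) = t * c1 v + (1-t) * c2 v" for v
    unfolding c1_def c2_def by (simp add: sum.distrib sum_distrib_left)
  have tm: "If_term f (t * p1 u v + (1-t) * p2 u v) (t * r u + (1-t) * r u) (t * c1 v + (1-t) * c2 v)
     \<le> ereal t * If_term f (p1 u v) (r u) (c1 v) + ereal (1-t) * If_term f (p2 u v) (r u) (c2 v)"
    if uv: "u \<in> U" "v \<in> V" for u v
  proof -
    have r1: "p1 u v \<le> r u" unfolding r_def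
      using fin uv nn1 by (intro member_le_sum) auto
    have r2: "p2 u v \<le> r u" unfolding r_def row
      using fin uv nn2 by (intro member_le_sum) auto
    have cc1: "p1 u v \<le> c1 v" unfolding c1_def
      using fin uv nn1 by (intro member_le_sum) auto
    have cc2: "p2 u v \<le> c2 v" unfolding c2_def
      using fin uv nn2 by (intro member_le_sum) auto
    have "If_term f (t * p1 u v + (1-t) * p2 u v) (r u * (t * c1 v + (1-t) * c2 v)) 1
       = If_term f (t * p1 u v + (1-t) * p2 u v) (t * (r u * c1 v) + (1-t) * (r u * c2 v)) 1"
      by (simp add: algebra_simps)
    also have "\<dots> \<le> ereal t * If_term f (p1 u v) (r u * c1 v) 1 + ereal (1-t) * If_term f (p2 u v) (r u * c2 v) 1"
      using nn1[of u v] nn2[of u v] r1 r2 cc1 cc2 t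
      by (intro persp_convex[OF cv]) (auto intro: mult_nonneg_nonneg mult_pos_pos)
    finally show ?thesis by (simp add: If_term_1[of f _ "r u"] algebra_simps)
  qed
  have "I_f f U V (\<lambda>u v. t * p1 u v + (1-t) * p2 u v)
     = (\<Sum>u\<in>U. \<Sum>v\<in>V. If_term f (t * p1 u v + (1-t) * p2 u v) (t * r u + (1-t) * r u) (t * c1 v + (1-t) * c2 v))"
    unfolding I_f_def rowm colm ..
  also have "\<dots> \<le> (\<Sum>u\<in>U. \<Sum>v\<in>V. ereal t * If_term f (p1 u v) (r u) (c1 v) + ereal (1-t) * If_term f (p2 u v) (r u) (c2 v))"
    by (intro sum_mono tm) auto
  also have "\<dots> = ereal t * I_f f U V p1 + ereal (1-t) * I_f f U V p2"
    unfolding I_f_def r_def[symmetric] c1_def[symmetric] c2_def[symmetric] row[symmetric]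
    using t by (simp add: sum.distrib sum_distrib_right_ereal mult.commute[of "ereal _"])
  finally show ?thesis .
qed


lemma I_f_reindex:
  assumes hx: "bij_betw hx U' U" and hy: "bij_betw hy V' V"
  shows "I_f f U V p = I_f f U' V' (\<lambda>u v. p (hx u) (hy v))"
proof -
  have "I_f f U' V' (\<lambda>u v. p (hx u) (hy v)) =
     (\<Sum>u\<in>U'. \<Sum>v\<in>V'. If_term f (p (hx u) (hy v)) (\<Sum>v'\<in>V. p (hx u) v') (\<Sum>u'\<in>U. p u' (hy v)))"
  proof -
    have e1: "(\<Sum>v'\<in>V'. p (hx u) (hy v')) = (\<Sum>v'\<in>V. p (hx u) v')" for u
      by (rule sum.reindex_bij_betw[OF hy])
    have e2: "(\<Sum>u'\<in>U'. p (hx u') (hy v)) = (\<Sum>u'\<in>U. p u' (hy v))" for v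
      by (rule sum.reindex_bij_betw[OF hx])
    show ?thesis unfolding I_f_def e1 e2 ..
  qed
  also have "\<dots> = (\<Sum>u\<in>U'. \<Sum>v\<in>V. If_term f (p (hx u) v) (\<Sum>v'\<in>V. p (hx u) v') (\<Sum>u'\<in>U. p u' v))"
    by (rule sum.cong[OF refl], rule sum.reindex_bij_betw[OF hy])
  also have "\<dots> = I_f f U V p"
    unfolding I_f_def by (rule sum.reindex_bij_betw[OF hx])
  finally show ?thesis ..
qed

lemma saddle_types:
  fixes W :: "'x::finite \<Rightarrow> 'y::finite \<Rightarrow> real"
  assumes sp: "saddle_property f" and W: "is_kernel_on UNIV UNIV W"
    and a1: "is_pmf_on UNIV a1" and a2: "is_pmf_on UNIV a2" and t: "0 \<le> t" "t \<le> 1"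
  shows "ereal t * I_f f UNIV UNIV (\<lambda>x y. a1 x * W x y)
        + ereal (1 - t) * I_f f UNIV UNIV (\<lambda>x y. a2 x * W x y)
      \<le> I_f f UNIV UNIV (\<lambda>x y. (t * a1 x + (1 - t) * a2 x) * W x y)"
proof -
  obtain hx :: "nat \<Rightarrow> 'x" where hx: "bij_betw hx {0..<card (UNIV::'x set)} UNIV"
    using ex_bij_betw_nat_finite[of "UNIV::'x set"] by auto
  obtain hy :: "nat \<Rightarrow> 'y" where hy: "bij_betw hy {0..<card (UNIV::'y set)} UNIV"
    using ex_bij_betw_nat_finite[of "UNIV::'y set"] by auto
  define U where "U = {0..<card (UNIV::'x set)}"
  define V where "V = {0..<card (UNIV::'y set)}"
  define K where "K u v = W (hx u) (hy v)" for u v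
  define p1 where "p1 u = a1 (hx u)" for u
  define p2 where "p2 u = a2 (hx u)" for u
  have pmf_re: "is_pmf_on A (\<lambda>u. q (h u))" if "bij_betw h A UNIV" "is_pmf_on UNIV q" for A h and q :: "'b \<Rightarrow> real"
    using that sum.reindex_bij_betw[OF that(1), of q] unfolding is_pmf_on_def by auto
  have K: "is_kernel_on U V K"
    using W hy unfolding is_kernel_on_def K_def U_def V_def by (auto intro: pmf_re)
  have P1: "is_pmf_on U p1" unfolding p1_def U_def by (rule pmf_re[OF hx a1])
  have P2: "is_pmf_on U p2" unfolding p2_def U_def by (rule pmf_re[OF hx a2])
  have "ereal t * I_f f U V (\<lambda>u v. p1 u * K u v) + ereal (1 - t) * I_f f U V (\<lambda>u v. p2 u * K u v)
      \<le> I_f f U V (\<lambda>u v. (t * p1 u + (1 - t) * p2 u) * K u v)"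
    using sp K P1 P2 t unfolding saddle_property_def U_def V_def by auto
  then show ?thesis
    unfolding I_f_reindex[OF hx hy] U_def[symmetric] V_def[symmetric] p1_def p2_def K_def .
qed


lemma sum_lin: "(\<Sum>x\<in>A. t * f x + u * g x) = t * sum f A + u * sum g A" for t u :: real
  by (simp add: sum.distrib sum_distrib_left)

lemma sum_UNIV4: "sum Q (UNIV :: ('s::finite \<times> 'x::finite \<times> 'y::finite \<times> 'h::finite) set)
   = (\<Sum>s\<in>UNIV. \<Sum>x\<in>UNIV. \<Sum>y\<in>UNIV. \<Sum>h\<in>UNIV. Q (s, x, y, h))"
  by (simp add: sum.cartesian_product UNIV_Times_UNIV[symmetric] del: UNIV_Times_UNIV)

theorem lemma4p4:
  fixes f :: "real \<Rightarrow> real"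
    and PS :: "'s::finite \<Rightarrow> real"
    and W :: "'x::finite \<Rightarrow> 'y::finite \<Rightarrow> real"
  assumes "is_pmf_on UNIV PS"
    and "is_kernel_on UNIV UNIV W"
    and "saddle_property f"
  shows "\<forall>Q1\<in>(Q_fDPI f PS W :: ('s \<times> 'x \<times> 'y \<times> 'h::finite \<Rightarrow> real) set).
           \<forall>Q2\<in>Q_fDPI f PS W. \<forall>t::real. 0 \<le> t \<and> t \<le> 1 \<longrightarrow>
             (\<lambda>z. t * Q1 z + (1 - t) * Q2 z) \<in> Q_fDPI f PS W"
proof (intro ballI allI impI)
  fix Q1 Q2 :: "'s \<times> 'x \<times> 'y \<times> 'h \<Rightarrow> real" and t :: real
  assume Q1: "Q1 \<in> Q_fDPI f PS W" and Q2: "Q2 \<in> Q_fDPI f PS W" and t: "0 \<le> t \<and> t \<le> 1"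
  have cv: "convex_on {0<..} f" using assms(3) unfolding saddle_property_def by auto
  define Qm where "Qm z = t * Q1 z + (1 - t) * Q2 z" for z
  note D1 = Q1[unfolded Q_fDPI_def mem_Collect_eq]
  note D2 = Q2[unfolded Q_fDPI_def mem_Collect_eq]
  have nn1: "0 \<le> Q1 z" for z using D1 unfolding is_pmf_on_def by (cases z) auto
  have nn2: "0 \<le> Q2 z" for z using D2 unfolding is_pmf_on_def by (cases z) auto
  have pmf: "is_pmf_on UNIV Qm"
    using D1 D2 t nn1 nn2 unfolding is_pmf_on_def Qm_def by (auto simp: sum_lin)
  have marg: "(\<Sum>x\<in>UNIV. \<Sum>y\<in>UNIV. \<Sum>h\<in>UNIV. Qm (s, x, y, h)) = PS s" for s
  proof -
    have "(\<Sum>x\<in>UNIV. \<Sum>y\<in>UNIV. \<Sum>h\<in>UNIV. Qm (s, x, y, h)) = t * PS s + (1-t) * PS s"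
      using D1 D2 unfolding Qm_def by (simp add: sum_lin)
    then show ?thesis by (simp add: algebra_simps)
  qed
  define X1 where "X1 x = (\<Sum>s\<in>UNIV. \<Sum>y'\<in>UNIV. \<Sum>h\<in>UNIV. Q1 (s, x, y', h))" for x
  define X2 where "X2 x = (\<Sum>s\<in>UNIV. \<Sum>y'\<in>UNIV. \<Sum>h\<in>UNIV. Q2 (s, x, y', h))" for x
  have ch1: "(\<Sum>s\<in>UNIV. \<Sum>h\<in>UNIV. Q1 (s, x, y, h)) = X1 x * W x y" for x y
    using D1 unfolding X1_def by (simp add: mult.commute)
  have ch2: "(\<Sum>s\<in>UNIV. \<Sum>h\<in>UNIV. Q2 (s, x, y, h)) = X2 x * W x y" for x y
    using D2 unfolding X2_def by (simp add: mult.commute)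
  have chm: "(\<Sum>s\<in>UNIV. \<Sum>h\<in>UNIV. Qm (s, x, y, h)) = (t * X1 x + (1-t) * X2 x) * W x y" for x y
    unfolding Qm_def sum_lin ch1 ch2 by (simp add: algebra_simps)
  have Xm: "(\<Sum>s\<in>UNIV. \<Sum>y'\<in>UNIV. \<Sum>h\<in>UNIV. Qm (s, x, y', h)) = t * X1 x + (1-t) * X2 x" for x
    unfolding Qm_def sum_lin X1_def X2_def ..
  have chan: "(\<Sum>s\<in>UNIV. \<Sum>h\<in>UNIV. Qm (s, x, y, h))
              = W x y * (\<Sum>s\<in>UNIV. \<Sum>y'\<in>UNIV. \<Sum>h\<in>UNIV. Qm (s, x, y', h))" for x y
    unfolding chm Xm by simp
  have Xpmf: "is_pmf_on UNIV (\<lambda>x. \<Sum>s\<in>UNIV. \<Sum>y'\<in>UNIV. \<Sum>h\<in>UNIV. Q (s, x, y', h))"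
    if "is_pmf_on UNIV Q" for Q :: "'s \<times> 'x \<times> 'y \<times> 'h \<Rightarrow> real"
  proof -
    have "(\<Sum>x\<in>UNIV. \<Sum>s\<in>UNIV. \<Sum>y'\<in>UNIV. \<Sum>h\<in>UNIV. Q (s, x, y', h)) = sum Q UNIV"
      unfolding sum_UNIV4 by (rule sum.swap)
    then show ?thesis using that unfolding is_pmf_on_def by (auto intro!: sum_nonneg)
  qed
  have XP1: "is_pmf_on UNIV X1" unfolding X1_def using D1 Xpmf by blast
  have XP2: "is_pmf_on UNIV X2" unfolding X2_def using D2 Xpmf by blast
  define q1 where "q1 s h = (\<Sum>x\<in>UNIV. \<Sum>y\<in>UNIV. Q1 (s, x, y, h))" for s h
  define q2 where "q2 s h = (\<Sum>x\<in>UNIV. \<Sum>y\<in>UNIV. Q2 (s, x, y, h))" for s h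
  have rowq: "(\<Sum>h\<in>UNIV. \<Sum>x\<in>UNIV. \<Sum>y\<in>UNIV. Q (s, x, y, h)) = (\<Sum>x\<in>UNIV. \<Sum>y\<in>UNIV. \<Sum>h\<in>UNIV. Q (s, x, y, h))"
    for Q :: "'s \<times> 'x \<times> 'y \<times> 'h \<Rightarrow> real" and s
  proof -
    have "(\<Sum>h\<in>UNIV. \<Sum>x\<in>UNIV. \<Sum>y\<in>UNIV. Q (s, x, y, h)) = (\<Sum>x\<in>UNIV. \<Sum>h\<in>UNIV. \<Sum>y\<in>UNIV. Q (s, x, y, h))"
      by (rule sum.swap)
    also have "\<dots> = (\<Sum>x\<in>UNIV. \<Sum>y\<in>UNIV. \<Sum>h\<in>UNIV. Q (s, x, y, h))"
      by (rule sum.cong[OF refl], rule sum.swap)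
    finally show ?thesis .
  qed
  have row: "(\<Sum>h\<in>UNIV. q1 s h) = (\<Sum>h\<in>UNIV. q2 s h)" for s
    unfolding q1_def q2_def rowq using D1 D2 by simp
  have qm: "(\<lambda>s h. \<Sum>x\<in>UNIV. \<Sum>y\<in>UNIV. Qm (s, x, y, h)) = (\<lambda>s h. t * q1 s h + (1-t) * q2 s h)"
    unfolding Qm_def q1_def q2_def sum_lin ..
  have Sside: "I_f f UNIV UNIV (\<lambda>s h. \<Sum>x\<in>UNIV. \<Sum>y\<in>UNIV. Qm (s, x, y, h))
      \<le> ereal t * I_f f UNIV UNIV q1 + ereal (1-t) * I_f f UNIV UNIV q2"
    unfolding qm using t row
    by (intro If_f_convex_fixed_row[OF cv]) (auto simp: q1_def q2_def intro!: sum_nonneg nn1 nn2)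
  have jm: "(\<lambda>x y. \<Sum>s\<in>UNIV. \<Sum>h\<in>UNIV. Qm (s, x, y, h)) = (\<lambda>x y. (t * X1 x + (1-t) * X2 x) * W x y)"
    using chm by auto
  have j1: "(\<lambda>x y. \<Sum>s\<in>UNIV. \<Sum>h\<in>UNIV. Q1 (s, x, y, h)) = (\<lambda>x y. X1 x * W x y)"
    using ch1 by auto
  have j2: "(\<lambda>x y. \<Sum>s\<in>UNIV. \<Sum>h\<in>UNIV. Q2 (s, x, y, h)) = (\<lambda>x y. X2 x * W x y)"
    using ch2 by auto
  have Xside: "ereal t * I_f f UNIV UNIV (\<lambda>x y. X1 x * W x y)
        + ereal (1 - t) * I_f f UNIV UNIV (\<lambda>x y. X2 x * W x y)
      \<le> I_f f UNIV UNIV (\<lambda>x y. (t * X1 x + (1 - t) * X2 x) * W x y)"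
    using saddle_types[OF assms(3,2) XP1 XP2] t by auto
  have I1: "I_f f UNIV UNIV q1 \<le> I_f f UNIV UNIV (\<lambda>x y. X1 x * W x y)"
    using D1 unfolding q1_def j1 by auto
  have I2: "I_f f UNIV UNIV q2 \<le> I_f f UNIV UNIV (\<lambda>x y. X2 x * W x y)"
    using D2 unfolding q2_def j2 by auto
  have mid: "ereal t * I_f f UNIV UNIV q1 + ereal (1-t) * I_f f UNIV UNIV q2
     \<le> ereal t * I_f f UNIV UNIV (\<lambda>x y. X1 x * W x y) + ereal (1 - t) * I_f f UNIV UNIV (\<lambda>x y. X2 x * W x y)"
    using t by (intro add_mono ereal_mult_left_mono I1 I2) auto
  have Iineq: "I_f f UNIV UNIV (\<lambda>s h. \<Sum>x\<in>UNIV. \<Sum>y\<in>UNIV. Qm (s, x, y, h))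
      \<le> I_f f UNIV UNIV (\<lambda>x y. \<Sum>s\<in>UNIV. \<Sum>h\<in>UNIV. Qm (s, x, y, h))"
    unfolding jm using Sside mid Xside by (meson order_trans)
  have "Qm \<in> Q_fDPI f PS W"
    unfolding Q_fDPI_def mem_Collect_eq using pmf marg chan Iineq by blast
  then show "(\<lambda>z. t * Q1 z + (1 - t) * Q2 z) \<in> Q_fDPI f PS W"
    unfolding Qm_def .
qed

end
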